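(* Let $E$ be the elliptic curve $Y^2+11Y=X^3+11X^2+33X$ over $\mathbb{Q}$, and let $j:E\to\mathbb{P}^1$ be the rational function $$j(X,Y)=\frac{h(X,Y)}{(XY-11)^{11}},$$ where $h(X,Y)=(X^2+11X+22)^3\big((11X^2+88X+121)Y+2X^4+55X^3+451X^2+1452X+1452\big)^3 g(X,Y)$ and $g(X,Y)=(6750X^8+337590X^7+5159935X^6+36807958X^5+145636931X^4+341425458X^3+474292533X^2+362189058X+117523307)Y+51975X^9+1746052X^8+24440064X^7+188870352X^6+892661770X^5+2692703508X^4+5217583888X^3+6299026712X^2+4320837279X+1288408000$. Then for every rational point $(x,y)\in E(\mathbb{Q})$ (affine), $j(x,y)\in\mathbb{Z}$ if and only if $\frac{x}{xy-11}\in\mathbb{Z}$.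
   Context: Under an isomorphism (Halberstadt's) between $E$ and the modular curve $X_{ns}(11)$ (normalizer of a non-split Cartan subgroup of level $11$) sending the cusps to the zeros of $Y-11/X$, the function $j$ above is the natural $j$-invariant map of degree $55$. The statement to prove concerns only the explicit rational function given. Here $j(x,y)\in\mathbb{Z}$ means the value is finite and integral; similarly for $x/(xy-11)$. *)

theory Defs
  imports Complex_Main
begin

definition on_E :: "rat \<Rightarrow> rat \<Rightarrow> bool" where
  "on_E x y \<longleftrightarrow> y^2 + 11*y = x^3 + 11*x^2 + 33*x"

definition g_poly :: "rat \<Rightarrow> rat \<Rightarrow> rat" where
  "g_poly X Y =
     (6750*X^8 + 337590*X^7 + 5159935*X^6 + 36807958*X^5 + 145636931*X^4
      + 341425458*X^3 + 474292533*X^2 + 362189058*X + 117523307) * Y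
     + 51975*X^9 + 1746052*X^8 + 24440064*X^7 + 188870352*X^6 + 892661770*X^5
     + 2692703508*X^4 + 5217583888*X^3 + 6299026712*X^2 + 4320837279*X + 1288408000"

definition h_poly :: "rat \<Rightarrow> rat \<Rightarrow> rat" where
  "h_poly X Y =
     (X^2 + 11*X + 22)^3
     * ((11*X^2 + 88*X + 121)*Y + 2*X^4 + 55*X^3 + 451*X^2 + 1452*X + 1452)^3
     * g_poly X Y"

text \<open>j(x,y) is finite and integral: the denominator (xy-11)^11 is nonzero
  (points with xy = 11 are the cusps, i.e. poles of j) and the quotient is an integer.\<close>
definition j_integral :: "rat \<Rightarrow> rat \<Rightarrow> bool" where
  "j_integral x y \<longleftrightarrow> x*y - 11 \<noteq> 0 \<and> h_poly x y / (x*y - 11)^11 \<in> \<int>"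

definition u_integral :: "rat \<Rightarrow> rat \<Rightarrow> bool" where
  "u_integral x y \<longleftrightarrow> x*y - 11 \<noteq> 0 \<and> x / (x*y - 11) \<in> \<int>"

end

theory Submission
  imports Defs "HOL-Computational_Algebra.Primes"
begin


definition Ph :: "'a::comm_ring_1 \<Rightarrow> 'a \<Rightarrow> 'a" where
  "Ph a d = 117523307*d^16 + 362189058*a*d^14 + 474292533*a^2*d^12 + 341425458*a^3*d^10 + 145636931*a^4*d^8 + 36807958*a^5*d^6 + 5159935*a^6*d^4 + 337590*a^7*d^2 + 6750*a^8"
definition Sh :: "'a::comm_ring_1 \<Rightarrow> 'a \<Rightarrow> 'a" where
  "Sh a d = 1288408000*d^18 + 4320837279*a*d^16 + 6299026712*a^2*d^14 + 5217583888*a^3*d^12 + 2692703508*a^4*d^10 + 892661770*a^5*d^8 + 188870352*a^6*d^6 + 24440064*a^7*d^4 + 1746052*a^8*d^2 + 51975*a^9"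
definition Gh :: "'a::comm_ring_1 \<Rightarrow> 'a \<Rightarrow> 'a \<Rightarrow> 'a" where
  "Gh a b d = Ph a d * b + d * Sh a d"
definition P2h :: "'a::comm_ring_1 \<Rightarrow> 'a \<Rightarrow> 'a" where
  "P2h a d = 11*a^2*d + 88*a*d^3 + 121*d^5"
definition S2h :: "'a::comm_ring_1 \<Rightarrow> 'a \<Rightarrow> 'a" where
  "S2h a d = 2*a^4 + 55*a^3*d^2 + 451*a^2*d^4 + 1452*a*d^6 + 1452*d^8"
definition F2h :: "'a::comm_ring_1 \<Rightarrow> 'a \<Rightarrow> 'a \<Rightarrow> 'a" where
  "F2h a b d = P2h a d * b + S2h a d"
definition F1h :: "'a::comm_ring_1 \<Rightarrow> 'a \<Rightarrow> 'a" where
  "F1h a d = a^2 + 11*a*d^2 + 22*d^4"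
definition Qh :: "int \<Rightarrow> int \<Rightarrow> int" where
  "Qh a d = a^5 + 11*a^4*d^2 + 33*a^3*d^4 - 121*a*d^8 - 121*d^10"
definition Hh :: "int \<Rightarrow> int \<Rightarrow> int \<Rightarrow> int" where
  "Hh a b d = F1h a d ^ 3 * F2h a b d ^ 3 * Gh a b d"

lemma bez1: "(((-67)*d^2 + (-8)*a) * Qh a d + ((-363)*d^8 + (-231)*a*d^6 + 88*a^2*d^4 + 67*a^3*d^2 + 8*a^4) * F1h a d) = 121 * (d::int)^12"
  unfolding Qh_def F1h_def by algebra
lemma bez2: "(((-41877)*d^8 + (-56144)*a*d^6 + (-22748)*a^2*d^4 + (-3354)*a^3*d^2 + (-132)*a^4) * Qh a d + ((-3806)*d^8 + (-1991)*a*d^6 + 946*a^2*d^4 + 588*a^3*d^2 + 66*a^4) * (a * S2h a d + 11*d^5*P2h a d)) = 1331 * (d::int)^18"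
  unfolding Qh_def S2h_def P2h_def by algebra
lemma bez3: "((40111057247690*d^18 + 149668776051080*a*d^16 + 244080838286351*a^2*d^14 + 227550244686479*a^3*d^12 + 133035637526572*a^4*d^10 + 50267175423113*a^5*d^8 + 12168634370123*a^6*d^6 + 1797564675357*a^7*d^4 + 144514082482*a^8*d^2 + 4717562850*a^9) * Qh a d + (3754333*d^8 + 2451108*a*d^6 + (-842207)*a^2*d^4 + (-729680)*a^3*d^2 + (-90766)*a^4) * (a * Sh a d + 11*d^4*Ph a d)) = 161051 * (d::int)^28"
  unfolding Qh_def Sh_def Ph_def by algebra
lemma KG: "Gh (11*a) (11*b) (d::int) = 121 * (10683937*b*d^16 + 362189058*a*b*d^14 + 5217217863*a^2*b*d^12 + 41312480418*a^3*b*d^10 + 193842755161*a^4*b*d^8 + 538905313078*a^5*b*d^6 + 831012691685*a^6*b*d^4 + 598061277990*a^7*b*d^2 + 131538404250*a^8*b + 10648000*d^19 + 392803389*a*d^17 + 6299026712*a^2*d^15 + 57393422768*a^3*d^13 + 325817124468*a^4*d^11 + 1188132815870*a^5*d^9 + 2765250823632*a^6*d^7 + 3936096747264*a^7*d^5 + 3093237627172*a^8*d^3 + 1012845712725*a^9*d)"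
  unfolding Gh_def Sh_def Ph_def by algebra
lemma KF2: "F2h (11*a) (11*b) (d::int) = 121 * (121*a^2*b*d + 88*a*b*d^3 + 11*b*d^5 + 242*a^4 + 605*a^3*d^2 + 451*a^2*d^4 + 132*a*d^6 + 12*d^8)"
  unfolding F2h_def S2h_def P2h_def by algebra
lemma KF1: "F1h (11*a) (d::int) = 11 * (11*a^2 + 11*a*d^2 + 2*d^4)"
  unfolding F1h_def by algebra
lemma g_hom: "g_poly x y * e^19 = Gh (x*e^2) (y*e^3) (e::rat)"
  unfolding Gh_def Sh_def Ph_def g_poly_def by algebra
lemma h_hom: "h_poly x y * e^55 = F1h (x*e^2) e ^ 3 * F2h (x*e^2) (y*e^3) e ^ 3 * Gh (x*e^2) (y*e^3) (e::rat)"
proof -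
  have 1: "(x^2 + 11*x + 22) * e^4 = F1h (x*e^2) e" unfolding F1h_def by algebra
  have 2: "((11*x^2 + 88*x + 121)*y + 2*x^4 + 55*x^3 + 451*x^2 + 1452*x + 1452) * e^8 = F2h (x*e^2) (y*e^3) e"
    unfolding F2h_def S2h_def P2h_def by algebra
  have "h_poly x y * e^55 = ((x^2 + 11*x + 22) * e^4)^3 * (((11*x^2 + 88*x + 121)*y + 2*x^4 + 55*x^3 + 451*x^2 + 1452*x + 1452) * e^8)^3 * (g_poly x y * e^19)"
    unfolding h_poly_def by algebra
  then show ?thesis using 1 2 g_hom by simp
qed
lemma of_int_Hh: "(of_int (Hh a b d) :: rat) = F1h (of_int a) (of_int d) ^ 3 * F2h (of_int a) (of_int b) (of_int d) ^ 3 * Gh (of_int a) (of_int b) (of_int d)"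
  unfolding Hh_def F1h_def F2h_def S2h_def P2h_def Gh_def Ph_def Sh_def by simp



lemma dvd_comb: "U*A + V*B = (C::int) \<Longrightarrow> p dvd A \<Longrightarrow> p dvd B \<Longrightarrow> p dvd C"
  by (metis dvd_add dvd_mult)

lemma prime11: "prime (11::int)"
  by code_simp

lemma dvd11:
  fixes p d :: int
  assumes "prime p" "p dvd c * d^m" "\<not> p dvd d" "c = 11^k" "k > 0"
  shows "p = 11"
proof -
  have "p dvd 11^k \<or> p dvd d^m" using assms(1,2,4) prime_dvd_mult_iff by blast
  moreover have "\<not> p dvd d^m" using assms(1,3) prime_dvd_power_iff
    by (metis dvd_power_le dvd_refl gr0I power_0 prime_dvd_power)
  ultimately have "p dvd 11^k" by blast
  then have "p dvd 11" using assms(1,5) prime_dvd_power_iff by blast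
  then show ?thesis using primes_dvd_imp_eq[OF assms(1) prime11] by simp
qed

lemma prime_case:
  fixes a b d p :: int
  assumes p: "prime p" and pN: "p dvd a*b - 11*d^5" and pH: "p dvd Hh a b d"
    and cad: "coprime a d" and cbd: "coprime b d"
    and C: "b^2 + 11*b*d^3 = a^3 + 11*a^2*d^2 + 33*a*d^4"
  shows "p = 11"
proof -
  have nd: "\<not> p dvd d"
  proof
    assume pd: "p dvd d"
    then have "p dvd d^5" by (rule dvd_trans) simp
    then have "p dvd (a*b - 11*d^5) + 11*d^5" using pN by (intro dvd_add) simp_all
    then have "p dvd a*b" by simp
    then have "p dvd a \<or> p dvd b" using prime_dvd_mult_iff[OF p] by simp
    moreover have "\<not> is_unit p" using p not_prime_unit by blast
    ultimately show False using pd coprime_common_divisor[OF cad] coprime_common_divisor[OF cbd] by blast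
  qed
  have Qd: "Qh a d = (a*b - 11*d^5) * ((a*b - 11*d^5) + 22*d^5 + 11*a*d^3)"
    using C unfolding Qh_def by algebra
  have pQ: "p dvd Qh a d" unfolding Qd using pN by simp
  have "p dvd F1h a d ^ 3 * F2h a b d ^ 3 \<or> p dvd Gh a b d"
    using pH p prime_dvd_mult_iff unfolding Hh_def by blast
  then have "p dvd F1h a d \<or> p dvd F2h a b d \<or> p dvd Gh a b d"
    using p by (simp add: prime_dvd_mult_iff prime_dvd_power_iff)
  moreover
  { assume h: "p dvd F1h a d"
    have "p dvd 121 * d^12" by (rule dvd_comb[OF bez1 pQ h])
    then have ?thesis by (rule dvd11[OF p _ nd, where k=2]) simp_all }
  moreover
  { assume h: "p dvd F2h a b d"
    have e: "a * F2h a b d = P2h a d * (a*b - 11*d^5) + (a * S2h a d + 11*d^5*P2h a d)"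
      unfolding F2h_def by algebra
    have "p dvd a * F2h a b d" using h by simp
    then have h2: "p dvd (a * S2h a d + 11*d^5*P2h a d)" unfolding e
      using dvd_add_right_iff[OF dvd_mult[OF pN]] by blast
    have "p dvd 1331 * d^18" by (rule dvd_comb[OF bez2 pQ h2])
    then have ?thesis by (rule dvd11[OF p _ nd, where k=3]) simp_all }
  moreover
  { assume h: "p dvd Gh a b d"
    have e: "a * Gh a b d = Ph a d * (a*b - 11*d^5) + d * (a * Sh a d + 11*d^4*Ph a d)"
      unfolding Gh_def by algebra
    have "p dvd a * Gh a b d" using h by simp
    then have "p dvd d * (a * Sh a d + 11*d^4*Ph a d)" unfolding e
      using dvd_add_right_iff[OF dvd_mult[OF pN]] by blast
    then have h2: "p dvd (a * Sh a d + 11*d^4*Ph a d)" using p nd prime_dvd_mult_iff by blast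
    have "p dvd 161051 * d^28" by (rule dvd_comb[OF bez3 pQ h2])
    then have ?thesis by (rule dvd11[OF p _ nd, where k=5]) simp_all }
  ultimately show ?thesis by blast
qed



lemma eleven_case:
  fixes a b d :: int
  assumes N: "11 dvd a*b - 11*d^5" and cad: "coprime a d"
    and C: "b^2 + 11*b*d^3 = a^3 + 11*a^2*d^2 + 33*a*d^4"
  shows "11 dvd a" "11 dvd b" "\<not> 121 dvd a*b - 11*d^5"
proof -
  have "11 dvd (a*b - 11*d^5) + 11*d^5" using N by (intro dvd_add) simp_all
  then have "11 dvd a*b" by simp
  then have ab: "11 dvd a \<or> 11 dvd b" using prime_dvd_mult_iff[OF prime11] by simp
  show a: "11 dvd a"
  proof (cases "11 dvd a")
    case False
    then have b: "11 dvd b" using ab by simp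
    then obtain b1 where b1: "b = 11*b1" by blast
    have "a^3 = 11 * (11*b1^2 + 11*b1*d^3 - a^2*d^2 - 3*a*d^4)" using C unfolding b1 by algebra
    then have "11 dvd a^3" by simp
    then show ?thesis using prime_dvd_power_iff[OF prime11] by simp
  qed
  then obtain a1 where a1: "a = 11*a1" by blast
  have "b^2 = 11 * (121*a1^3 + 121*a1^2*d^2 + 33*a1*d^4 - b*d^3)" using C unfolding a1 by algebra
  then have "11 dvd b^2" by simp
  then show b: "11 dvd b" using prime_dvd_power_iff[OF prime11] by simp
  then obtain b1 where b1: "b = 11*b1" by blast
  have nd: "\<not> 11 dvd d"
  proof
    assume "11 dvd d"
    then have "is_unit (11::int)" using a coprime_common_divisor[OF cad] by blast
    then show False by simp
  qed
  show "\<not> 121 dvd a*b - 11*d^5"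
  proof
    assume "121 dvd a*b - 11*d^5"
    then obtain k where k: "a*b - 11*d^5 = 121*k" by blast
    have "d^5 = 11 * (a1*b1 - k)" using k unfolding a1 b1 by algebra
    then have "11 dvd d^5" by simp
    then show False using nd prime_dvd_power_iff[OF prime11] by simp
  qed
qed

lemma no_prime_unit:
  fixes M :: int
  assumes "M \<noteq> 0" "\<And>q. prime q \<Longrightarrow> q dvd M \<Longrightarrow> False"
  shows "is_unit M"
  using prime_divisor_exists[OF assms(1)] assms(2) by blast

lemma coprime_N:
  fixes a b d :: int
  assumes "coprime a d" "coprime b d"
  shows "coprime (a*b - 11*d^5) d"
proof -
  have "coprime d (a*b)" using assms by (simp add: ac_simps)
  then have "gcd d (a*b) = 1" by simp
  moreover have e: "a*b - 11*d^5 = (-11*d^4) * d + a*b" by algebra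
  ultimately have "gcd d (a*b - 11*d^5) = 1" unfolding e gcd_add_mult by simp
  then show ?thesis by (simp add: coprime_iff_gcd_eq_1 ac_simps)
qed

lemma dvd_11_unit:
  fixes N :: int
  assumes "N dvd 11" "\<not> 11 dvd N"
  shows "is_unit N"
proof (rule no_prime_unit)
  show "N \<noteq> 0" using assms by auto
  fix q :: int assume q: "prime q" "q dvd N"
  have "q dvd 11" using q(2) assms(1) by (rule dvd_trans)
  then have "q = 11" using primes_dvd_imp_eq[OF q(1) prime11] by simp
  then show False using q assms(2) by simp
qed

lemma core:
  fixes a b d :: int
  assumes cad: "coprime a d" and cbd: "coprime b d"
    and C: "b^2 + 11*b*d^3 = a^3 + 11*a^2*d^2 + 33*a*d^4"
    and N0: "a*b - 11*d^5 \<noteq> 0"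
  shows "(a*b - 11*d^5)^11 dvd Hh a b d \<longleftrightarrow> (a*b - 11*d^5) dvd a*d^3"
proof -
  define N where "N = a*b - 11*d^5"
  have cN: "coprime N d" unfolding N_def using coprime_N[OF cad cbd] .
  have A: "N dvd a*d^3 \<longleftrightarrow> N dvd 11"
  proof
    assume h: "N dvd a*d^3"
    have "coprime N (d^3)" using cN by simp
    then have "N dvd a" using h coprime_dvd_mult_left_iff by blast
    then have "N dvd a*b - N" by simp
    then have "N dvd 11*d^5" unfolding N_def by simp
    moreover have "coprime N (d^5)" using cN by simp
    ultimately show "N dvd 11" using coprime_dvd_mult_left_iff by blast
  next
    assume h: "N dvd 11"
    show "N dvd a*d^3"
    proof (cases "11 dvd N")
      case True
      then have "11 dvd a" using eleven_case(1)[OF _ cad C] unfolding N_def by blast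
      then have "N dvd a" using h by (rule dvd_trans[rotated])
      then show ?thesis by simp
    next
      case False
      then have "is_unit N" using dvd_11_unit h by blast
      then show ?thesis using unit_imp_dvd by blast
    qed
  qed
  have B: "N^11 dvd Hh a b d \<longleftrightarrow> N dvd 11"
  proof
    assume h: "N dvd 11"
    show "N^11 dvd Hh a b d"
    proof (cases "11 dvd N")
      case True
      have "11 dvd a" "11 dvd b" using eleven_case(1,2)[OF _ cad C] True unfolding N_def by blast+
      then obtain a1 b1 where a1: "a = 11*a1" and b1: "b = 11*b1" by blast
      have "Hh a b d = 11^11 * ((11*a1^2 + 11*a1*d^2 + 2*d^4)^3 * (121*a1^2*b1*d + 88*a1*b1*d^3 + 11*b1*d^5 + 242*a1^4 + 605*a1^3*d^2 + 451*a1^2*d^4 + 132*a1*d^6 + 12*d^8)^3 * (Gh (11*a1) (11*b1) d div 121))"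
      proof -
        have g: "Gh (11*a1) (11*b1) d = 121 * (Gh (11*a1) (11*b1) d div 121)"
          using KG[of a1 b1 d] by simp
        show ?thesis unfolding Hh_def a1 b1 KF1 KF2 apply (subst g) by algebra
      qed
      then have "11^11 dvd Hh a b d" by simp
      moreover have "N^11 dvd (11::int)^11" by (rule dvd_power_same[OF h])
      ultimately show ?thesis using dvd_trans by blast
    next
      case False
      then have "is_unit N" using dvd_11_unit h by blast
      then have "is_unit (N^11)" using is_unit_power_iff by blast
      then show ?thesis using unit_imp_dvd by blast
    qed
  next
    assume h: "N^11 dvd Hh a b d"
    have pr: "q = 11" if q: "prime q" "q dvd N" for q
    proof -
      have "q dvd N^11" using q(2) by (rule dvd_trans) simp
      then have "q dvd Hh a b d" using h by (rule dvd_trans)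
      then show ?thesis using prime_case[OF q(1) _ _ cad cbd C] q(2) unfolding N_def by blast
    qed
    show "N dvd 11"
    proof (cases "11 dvd N")
      case True
      then obtain M where M: "N = 11*M" by blast
      have n121: "\<not> 121 dvd N" using eleven_case(3)[OF _ cad C] True unfolding N_def by blast
      have "is_unit M"
      proof (rule no_prime_unit)
        show "M \<noteq> 0" using N0 M unfolding N_def by auto
        fix q :: int assume q: "prime q" "q dvd M"
        then have "q dvd N" unfolding M by simp
        then have "q = 11" using pr q(1) by blast
        then obtain m where "M = 11*m" using q(2) by blast
        then have "121 dvd N" unfolding M by simp
        then show False using n121 by simp
      qed
      then show ?thesis unfolding M by simp
    next
      case False
      have "is_unit N"
      proof (rule no_prime_unit)
        show "N \<noteq> 0" using N0 unfolding N_def .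
        fix q :: int assume q: "prime q" "q dvd N"
        then show False using pr False by blast
      qed
      then show ?thesis using unit_imp_dvd by blast
    qed
  qed
  show ?thesis using A B unfolding N_def by simp
qed



lemma aux1: "(y::rat)^2 + 11*y = x^3+11*x^2+33*x \<Longrightarrow> S^3 * ((y*W)^2 + 11*(y*W)*W) = W^2 * ((x*S)^3 + 11*(x*S)^2*S + 33*(x*S)*S^2)"
  by algebra
lemma aux3: "(y::rat)^2 + 11*y = x^3+11*x^2+33*x \<Longrightarrow> (y*D^3)^2 + 11*(y*D^3)*D^3 = (x*D^2)^3 + 11*(x*D^2)^2*D^2 + 33*(x*D^2)*D^4"
  by algebra

lemma rat_frac_Ints:
  fixes m n :: int
  assumes n: "n \<noteq> 0"
  shows "(of_int m / of_int n :: rat) \<in> \<int> \<longleftrightarrow> n dvd m"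
proof
  assume "(of_int m / of_int n :: rat) \<in> \<int>"
  then obtain k where k: "(of_int m / of_int n :: rat) = of_int k" by (auto elim: Ints_cases)
  then have "(of_int m :: rat) = of_int (k*n)" using n by (simp add: field_simps)
  then have "m = k*n" by (simp only: of_int_eq_iff)
  then show "n dvd m" by simp
next
  assume "n dvd m"
  then obtain k where "m = n*k" by blast
  then have "(of_int m / of_int n :: rat) = of_int k" using n by simp
  then show "(of_int m / of_int n :: rat) \<in> \<int>" by simp
qed

lemma denoms:
  assumes "on_E x y"
  obtains a b d :: int where "d > 0" "x = of_int a / of_int (d^2)" "y = of_int b / of_int (d^3)"
    "coprime a d" "coprime b d"
proof -
  obtain r s where xr: "x = Fract r s" and s0: "s > 0" and crs: "coprime r s" by (cases x)
  obtain q w where yq: "y = Fract q w" and w0: "w > 0" and cqw: "coprime q w" by (cases y)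
  have xe: "x = of_int r / of_int s" using xr Fract_of_int_quotient by simp
  have ye: "y = of_int q / of_int w" using yq Fract_of_int_quotient by simp
  have xs: "x * of_int s = of_int r" using xe s0 by simp
  have ys: "y * of_int w = of_int q" using ye w0 by simp
  have cur: "y^2 + 11*y = x^3+11*x^2+33*x" using assms unfolding on_E_def .
  have "(of_int s)^3 * ((of_int q)^2 + 11*of_int q*of_int w) = (of_int w)^2 * ((of_int r)^3 + 11*(of_int r)^2*of_int s + 33*of_int r*(of_int s)^2 :: rat)"
    using aux1[OF cur, of "of_int s" "of_int w"] unfolding xs ys .
  then have "(of_int (s^3 * (q^2 + 11*q*w)) :: rat) = of_int (w^2 * (r^3 + 11*r^2*s + 33*r*s^2))"
    by simp
  then have E: "s^3 * (q^2 + 11*q*w) = w^2 * (r^3 + 11*r^2*s + 33*r*s^2)" by (simp only: of_int_eq_iff)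
  have c1: "coprime (w^2) (q^2 + 11*q*w)"
  proof -
    have "gcd w ((11*q)*w + q^2) = gcd w (q^2)" by (rule gcd_add_mult)
    moreover have "coprime w (q^2)" using cqw by (simp add: ac_simps)
    ultimately have "gcd w (q^2 + 11*q*w) = 1" by (simp add: ac_simps)
    then have "coprime w (q^2 + 11*q*w)" by (simp add: coprime_iff_gcd_eq_1)
    then show ?thesis by simp
  qed
  have "w^2 dvd s^3 * (q^2 + 11*q*w)" unfolding E by simp
  then have d1: "w^2 dvd s^3" using c1 coprime_dvd_mult_left_iff by blast
  have c2: "coprime (s^3) (r^3 + 11*r^2*s + 33*r*s^2)"
  proof -
    have "gcd s ((11*r^2 + 33*r*s)*s + r^3) = gcd s (r^3)" by (rule gcd_add_mult)
    moreover have "coprime s (r^3)" using crs by (simp add: ac_simps)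
    moreover have "(11*r^2 + 33*r*s)*s + r^3 = r^3 + 11*r^2*s + 33*r*s^2" by algebra
    ultimately have "gcd s (r^3 + 11*r^2*s + 33*r*s^2) = 1" by simp
    then have "coprime s (r^3 + 11*r^2*s + 33*r*s^2)" by (simp add: coprime_iff_gcd_eq_1)
    then show ?thesis by simp
  qed
  have "s^3 dvd w^2 * (r^3 + 11*r^2*s + 33*r*s^2)" unfolding E[symmetric] by simp
  then have d2: "s^3 dvd w^2" using c2 coprime_dvd_mult_left_iff by blast
  have sw: "s^3 = w^2" using d1 d2 s0 w0 by (intro zdvd_antisym_nonneg) simp_all
  have "s^2 dvd w^2" using sw by (metis dvd_triv_right power2_eq_square power3_eq_cube mult.assoc)
  then have "s dvd w" by simp
  then obtain d where wd: "w = s*d" by blast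
  have "s^2 * s = s^2 * d^2"
    using sw unfolding wd by (simp add: power2_eq_square power3_eq_cube algebra_simps)
  then have sd: "s = d^2" using s0 by simp
  have wd3: "w = d^3" using wd sd by (simp add: power2_eq_square power3_eq_cube)
  have dpos: "d > 0" using wd s0 w0 by (simp add: zero_less_mult_iff)
  show ?thesis
  proof (rule that[of d r q])
    show "0 < d" by (fact dpos)
    show "x = of_int r / of_int (d^2)" using xe sd by simp
    show "y = of_int q / of_int (d^3)" using ye wd3 by simp
    show "coprime r d" using crs sd by simp
    show "coprime q d" using cqw wd3 by simp
  qed
qed

theorem theorem4p1:
  fixes x y :: rat
  assumes "on_E x y"
  shows "j_integral x y \<longleftrightarrow> u_integral x y"
proof -
  obtain a b d :: int where d0: "d > 0" and xa: "x = of_int a / of_int (d^2)"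
    and yb: "y = of_int b / of_int (d^3)" and cad: "coprime a d" and cbd: "coprime b d"
    using denoms[OF assms] by blast
  define N where "N = a*b - 11*d^5"
  have e0: "(of_int d :: rat) \<noteq> 0" using d0 by simp
  have C: "b^2 + 11*b*d^3 = a^3 + 11*a^2*d^2 + 33*a*d^4"
  proof -
    have xs: "x * (of_int d)^2 = of_int a" using e0 unfolding xa by simp
    have ys: "y * (of_int d)^3 = of_int b" using e0 unfolding yb by simp
    have cur: "y^2 + 11*y = x^3+11*x^2+33*x" using assms unfolding on_E_def .
    have "(of_int b)^2 + 11*of_int b*(of_int d)^3 = (of_int a)^3 + 11*(of_int a)^2*(of_int d)^2 + 33*of_int a*((of_int d)^4 :: rat)"
      using aux3[OF cur, of "of_int d"] unfolding xs ys .
    then have "(of_int (b^2 + 11*b*d^3) :: rat) = of_int (a^3 + 11*a^2*d^2 + 33*a*d^4)"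
      by simp
    then show ?thesis by (simp only: of_int_eq_iff)
  qed
  have t: "x*y - 11 = of_int N / of_int (d^5)"
    using e0 unfolding xa yb N_def by (simp add: field_simps)
  have xe: "x * (of_int d)^2 = of_int a" using e0 unfolding xa by simp
  have ye: "y * (of_int d)^3 = of_int b" using e0 unfolding yb by simp
  have "h_poly x y * (of_int d)^55 = of_int (Hh a b d)"
    unfolding h_hom of_int_Hh xe ye ..
  then have h: "h_poly x y = of_int (Hh a b d) / of_int (d^55)"
    using e0 by (simp add: field_simps)
  show ?thesis
  proof (cases "N = 0")
    case True
    then have "x*y - 11 = 0" unfolding t by simp
    then show ?thesis unfolding j_integral_def u_integral_def by simp
  next
    case False
    have tn: "x*y - 11 \<noteq> 0" using False e0 unfolding t by simp
    have j: "h_poly x y / (x*y - 11)^11 = of_int (Hh a b d) / of_int (N^11)"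
      unfolding h t using e0 False by (simp add: field_simps power_mult_distrib flip: power_mult)
    have u: "x / (x*y - 11) = of_int (a*d^3) / of_int N"
      unfolding t unfolding xa using e0 False by (simp add: field_simps)
    have "j_integral x y \<longleftrightarrow> N^11 dvd Hh a b d"
      unfolding j_integral_def j using tn rat_frac_Ints[of "N^11" "Hh a b d"] False by simp
    moreover have "u_integral x y \<longleftrightarrow> N dvd a*d^3"
      unfolding u_integral_def u using tn rat_frac_Ints[OF False, of "a*d^3"] by blast
    ultimately show ?thesis using core[OF cad cbd C] False unfolding N_def by simp
  qed
qed


end
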